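(* Let $G$ be a simple, undirected, connected graph on $N>2$ vertices with edge set $E$ and degree sequence $d_1\le d_2\le\cdots\le d_N$. Then $$R^+(G)\ge 2N(N-1)-\frac{4|E|}{1+d_1}.$$
   Context: For vertices $i,j$ of $G$, $R_{ij}$ denotes the effective resistance between $i$ and $j$ when every edge of $G$ is a unit resistor. The additive degree-Kirchhoff index is $R^+(G)=\sum_{i<j}(d_i+d_j)R_{ij}$, where $d_i$ is the degree of vertex $i$. *)

theory Defs
  imports Complex_Main
begin

definition simple_graph :: "'a set \<Rightarrow> ('a \<Rightarrow> 'a \<Rightarrow> bool) \<Rightarrow> bool" where
  "simple_graph V E \<longleftrightarrow> finite V \<and> (\<forall>u v. E u v \<longrightarrow> u \<in> V \<and> v \<in> V)
     \<and> (\<forall>u v. E u v \<longrightarrow> E v u) \<and> (\<forall>u. \<not> E u u)"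

definition connected_graph :: "'a set \<Rightarrow> ('a \<Rightarrow> 'a \<Rightarrow> bool) \<Rightarrow> bool" where
  "connected_graph V E \<longleftrightarrow> (\<forall>u\<in>V. \<forall>v\<in>V. (u, v) \<in> {(a, b). E a b}\<^sup>*)"

definition degree :: "'a set \<Rightarrow> ('a \<Rightarrow> 'a \<Rightarrow> bool) \<Rightarrow> 'a \<Rightarrow> nat" where
  "degree V E v = card {u \<in> V. E v u}"

definition edge_set :: "'a set \<Rightarrow> ('a \<Rightarrow> 'a \<Rightarrow> bool) \<Rightarrow> 'a set set" where
  "edge_set V E = {{u, v} | u v. u \<in> V \<and> v \<in> V \<and> E u v}"

text \<open>Effective resistance between i and j with unit resistors on every edge:
  inject a unit current at i, extract it at j; a potential x satisfies Kirchhoff's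
  current law at every vertex (Ohm's law with unit conductances), and R i j is the
  resulting potential difference x i - x j (well defined for connected graphs).\<close>
definition eff_resistance :: "'a set \<Rightarrow> ('a \<Rightarrow> 'a \<Rightarrow> bool) \<Rightarrow> 'a \<Rightarrow> 'a \<Rightarrow> real" where
  "eff_resistance V E i j = (THE r. \<exists>x :: 'a \<Rightarrow> real.
      (\<forall>v\<in>V. (\<Sum>u\<in>{u \<in> V. E v u}. x v - x u) =
               (if v = i \<and> v \<noteq> j then 1 else if v = j \<and> v \<noteq> i then -1 else 0))
      \<and> r = x i - x j)"

definition add_degree_kirchhoff :: "('a::linorder) set \<Rightarrow> ('a \<Rightarrow> 'a \<Rightarrow> bool) \<Rightarrow> real" where
  "add_degree_kirchhoff V E =
     (\<Sum>(i, j)\<in>{(i, j). i \<in> V \<and> j \<in> V \<and> i < j}.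
        real (degree V E i + degree V E j) * eff_resistance V E i j)"

end

theory Submission
  imports Defs "Jordan_Normal_Form.Determinant"
begin


lemma solve_sys:
  fixes V :: "'a::linorder set" and Q :: "'a \<Rightarrow> 'a \<Rightarrow> real"
  assumes fin: "finite V"
    and inj: "\<And>x. \<forall>v\<in>V. (\<Sum>u\<in>V. Q v u * x u) = 0 \<Longrightarrow> \<forall>v\<in>V. x v = 0"
  shows "\<exists>x. \<forall>v\<in>V. (\<Sum>u\<in>V. Q v u * x u) = b v"
proof -
  define n where "n = card V"
  define xs where "xs = sorted_list_of_set V"
  define g where "g = (\<lambda>k. xs ! k)"
  have bij: "bij_betw g {0..<n} V"
    unfolding g_def xs_def n_def using fin
    by (intro bij_betw_nth) auto
  define h where "h = inv_into {0..<n} g"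
  have gh: "\<And>u. u \<in> V \<Longrightarrow> g (h u) = u" unfolding h_def
    by (meson bij bij_betw_inv_into_right)
  have hg: "\<And>c. c < n \<Longrightarrow> h (g c) = c" unfolding h_def
    using bij bij_betw_inv_into_left by fastforce
  have reidx: "\<And>F. (\<Sum>u\<in>V. F u) = (\<Sum>c\<in>{0..<n}. F (g c))"
    using sum.reindex_bij_betw[OF bij] by metis
  define A where "A = mat n n (\<lambda>(a,c). Q (g a) (g c))"
  have Ac: "A \<in> carrier_mat n n" unfolding A_def by simp
  have Av: "\<And>w a. w \<in> carrier_vec n \<Longrightarrow> a < n \<Longrightarrow>
      (A *\<^sub>v w) $ a = (\<Sum>u\<in>V. Q (g a) u * w $ (h u))"
    unfolding reidx A_def
    by (auto simp: scalar_prod_def hg intro!: sum.cong)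
  have "det A \<noteq> 0"
  proof
    assume "det A = 0"
    then obtain w where w: "w \<in> carrier_vec n" "w \<noteq> 0\<^sub>v n" "A *\<^sub>v w = 0\<^sub>v n"
      using det_0_iff_vec_prod_zero[OF Ac] by blast
    define x where "x u = w $ (h u)" for u
    have "\<forall>v\<in>V. (\<Sum>u\<in>V. Q v u * x u) = 0"
    proof
      fix v assume v: "v \<in> V"
      have hv: "h v < n" using bij v unfolding h_def
        by (metis atLeastLessThan_iff bij_betw_def inv_into_into)
      have "(A *\<^sub>v w) $ (h v) = 0" using w hv by simp
      then show "(\<Sum>u\<in>V. Q v u * x u) = 0" using Av[OF w(1) hv] gh[OF v]
        unfolding x_def by simp
    qed
    then have "\<forall>v\<in>V. x v = 0" by (rule inj)
    then have "w = 0\<^sub>v n"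
      using w(1) bij unfolding x_def
      by (intro eq_vecI) (auto simp: hg bij_betw_def)
    with w(2) show False by simp
  qed
  then have "A \<in> Units (ring_mat TYPE(real) n undefined)"
    by (rule det_non_zero_imp_unit[OF Ac])
  then obtain B where B: "B \<in> carrier_mat n n" "A * B = 1\<^sub>m n"
    unfolding Units_def by (auto simp: ring_mat_def)
  define bb where "bb = vec n (\<lambda>c. b (g c))"
  define w where "w = B *\<^sub>v bb"
  have wc: "w \<in> carrier_vec n" unfolding w_def bb_def using B by simp
  have Aw: "A *\<^sub>v w = bb" unfolding w_def
    using assoc_mult_mat_vec[OF Ac B(1), of bb] B(2) by (simp add: bb_def)
  show ?thesis
  proof (intro exI ballI)
    fix v assume v: "v \<in> V"
    have hv: "h v < n" using bij v unfolding h_def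
      by (metis atLeastLessThan_iff bij_betw_def inv_into_into)
    show "(\<Sum>u\<in>V. Q v u * w $ (h u)) = b v"
      using Av[OF wc hv] Aw hv gh[OF v] by (simp add: bb_def)
  qed
qed


hide_const (open) Polynomial.degree

definition Lap :: "'a set \<Rightarrow> ('a \<Rightarrow> 'a \<Rightarrow> bool) \<Rightarrow> ('a \<Rightarrow> real) \<Rightarrow> 'a \<Rightarrow> real" where
  "Lap V E x v = (\<Sum>u\<in>{u \<in> V. E v u}. x v - x u)"

definition DD :: "'a set \<Rightarrow> ('a \<Rightarrow> 'a \<Rightarrow> bool) \<Rightarrow> ('a \<Rightarrow> real) \<Rightarrow> ('a \<Rightarrow> real) \<Rightarrow> real" where
  "DD V E g h = (\<Sum>v\<in>V. \<Sum>u\<in>{u \<in> V. E v u}. (g v - g u) * (h v - h u))"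

lemma swap_sym:
  assumes "finite V" "\<And>u v. E u v \<Longrightarrow> E v u"
  shows "(\<Sum>v\<in>V. \<Sum>u\<in>{u \<in> V. E v u}. F v u) = (\<Sum>v\<in>V. \<Sum>u\<in>{u \<in> V. E v u}. F u v)"
proof -
  have "(\<Sum>v\<in>V. \<Sum>u\<in>{u \<in> V. E v u}. F v u) = (\<Sum>u\<in>V. \<Sum>v\<in>{v \<in> V. E v u}. F v u)"
    using sum.swap_restrict[OF assms(1) assms(1), of F E] by simp
  also have "\<dots> = (\<Sum>u\<in>V. \<Sum>v\<in>{v \<in> V. E u v}. F v u)"
    using assms(2) by (intro sum.cong refl) (metis)
  finally show ?thesis .
qed

lemma DD_Lap:
  assumes "finite V" "\<And>u v. E u v \<Longrightarrow> E v u"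
  shows "DD V E g h = 2 * (\<Sum>v\<in>V. g v * Lap V E h v)"
proof -
  have "DD V E g h = (\<Sum>v\<in>V. \<Sum>u\<in>{u \<in> V. E v u}. g v * (h v - h u))
       - (\<Sum>v\<in>V. \<Sum>u\<in>{u \<in> V. E v u}. g u * (h v - h u))"
    unfolding DD_def by (simp add: sum_subtractf[symmetric] algebra_simps)
  also have "(\<Sum>v\<in>V. \<Sum>u\<in>{u \<in> V. E v u}. g u * (h v - h u))
     = (\<Sum>v\<in>V. \<Sum>u\<in>{u \<in> V. E v u}. g v * (h u - h v))"
    by (rule swap_sym[OF assms])
  also have "\<dots> = - (\<Sum>v\<in>V. \<Sum>u\<in>{u \<in> V. E v u}. g v * (h v - h u))"
    by (simp add: sum_negf[symmetric] algebra_simps)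
  finally show ?thesis unfolding Lap_def by (simp add: sum_distrib_left)
qed

lemma DD_nonneg: "DD V E g g \<ge> 0"
  unfolding DD_def by (intro sum_nonneg) auto

lemma const_of_harmonic:
  assumes sg: "simple_graph V E" and cg: "connected_graph V E"
    and h: "\<forall>v\<in>V. Lap V E z v = 0" and uv: "u \<in> V" "v \<in> V"
  shows "z u = z v"
proof -
  have fin: "finite V" and sym: "\<And>u v. E u v \<Longrightarrow> E v u"
    and inV: "\<And>u v. E u v \<Longrightarrow> u \<in> V \<and> v \<in> V"
    using sg unfolding simple_graph_def by blast+
  have "DD V E z z = 0" using DD_Lap[OF fin sym, where g=z and h=z] h by simp
  then have "\<forall>v\<in>V. (\<Sum>u\<in>{u \<in> V. E v u}. (z v - z u) * (z v - z u)) = 0"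
    unfolding DD_def using fin
    by (subst (asm) sum_nonneg_eq_0_iff) (auto intro!: sum_nonneg)
  then have edge: "\<And>a b. E a b \<Longrightarrow> z a = z b"
    using fin inV by (fastforce simp: sum_nonneg_eq_0_iff)
  have "(u, v) \<in> {(a, b). E a b}\<^sup>*" using cg uv unfolding connected_graph_def by blast
  then show ?thesis
    by (induction rule: rtrancl_induct) (auto dest: edge)
qed

lemma Lap_sum_zero:
  assumes "finite V" "\<And>u v. E u v \<Longrightarrow> E v u"
  shows "(\<Sum>v\<in>V. Lap V E x v) = 0"
  using DD_Lap[OF assms, where g="\<lambda>_. 1" and h=x] by (simp add: DD_def)

lemma Q_eq:
  assumes "finite V" "v \<in> V"
  shows "(\<Sum>u\<in>V. ((if u = v then real (degree V E v) else 0) - (if E v u then 1 else 0) + 1) * x u)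
     = Lap V E x v + sum x V"
proof -
  have "(\<Sum>u\<in>V. ((if u = v then real (degree V E v) else 0) - (if E v u then 1 else 0) + 1) * x u)
     = (\<Sum>u\<in>V. (if u = v then real (degree V E v) * x u else 0))
       - (\<Sum>u\<in>V. (if E v u then x u else 0)) + sum x V"
  proof -
    have "\<And>u. ((if u = v then real (degree V E v) else 0) - (if E v u then 1 else 0) + 1) * x u
       = (if u = v then real (degree V E v) * x u else 0) - (if E v u then x u else 0) + x u"
      by (auto simp: algebra_simps)
    then show ?thesis by (simp add: sum_subtractf sum.distrib)
  qed
  also have "\<dots> = real (degree V E v) * x v - (\<Sum>u\<in>{u\<in>V. E v u}. x u) + sum x V"
    using assms by (simp add: sum.inter_filter)
  also have "\<dots> = Lap V E x v + sum x V"
    unfolding Lap_def Defs.degree_def using assms by (simp add: sum_subtractf)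
  finally show ?thesis .
qed

lemma exists_potential:
  fixes V :: "'a::linorder set"
  assumes sg: "simple_graph V E" and cg: "connected_graph V E"
    and bs: "(\<Sum>v\<in>V. b v) = 0"
  shows "\<exists>x. \<forall>v\<in>V. Lap V E x v = b v"
proof -
  have fin: "finite V" and sym: "\<And>u v. E u v \<Longrightarrow> E v u"
    using sg unfolding simple_graph_def by blast+
  define Q where "Q v u = ((if u = v then real (degree V E v) else 0) - (if E v u then 1 else 0) + 1)" for v u
  have QL: "\<And>x v. v \<in> V \<Longrightarrow> (\<Sum>u\<in>V. Q v u * x u) = Lap V E x v + sum x V"
    unfolding Q_def using Q_eq[OF fin] by blast
  have key: "sum x V = 0 \<and> (\<forall>v\<in>V. Lap V E x v = c v)"
    if h: "\<forall>v\<in>V. Lap V E x v + sum x V = c v" and cs: "sum c V = 0" for x c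
  proof -
    have "sum c V = (\<Sum>v\<in>V. Lap V E x v + sum x V)"
      using h by (intro sum.cong) auto
    then have "sum c V = (\<Sum>v\<in>V. Lap V E x v) + real (card V) * sum x V"
      by (simp add: sum.distrib)
    then have "real (card V) * sum x V = 0" using Lap_sum_zero[OF fin sym] cs by simp
    then have "sum x V = 0" using fin by (cases "V = {}") auto
    then show ?thesis using h by simp
  qed
  have "\<exists>x. \<forall>v\<in>V. (\<Sum>u\<in>V. Q v u * x u) = b v"
  proof (rule solve_sys[OF fin])
    fix x assume "\<forall>v\<in>V. (\<Sum>u\<in>V. Q v u * x u) = 0"
    then have h: "\<forall>v\<in>V. Lap V E x v + sum x V = 0" using QL by simp
    from key[OF h] have s0: "sum x V = 0" and l0: "\<forall>v\<in>V. Lap V E x v = 0" by auto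
    show "\<forall>v\<in>V. x v = 0"
    proof
      fix v assume v: "v \<in> V"
      have "\<forall>u\<in>V. x u = x v" using const_of_harmonic[OF sg cg l0 _ v] by blast
      then have "sum x V = real (card V) * x v" by simp
      then show "x v = 0" using s0 fin v by (cases "V = {}") auto
    qed
  qed
  then obtain x where "\<forall>v\<in>V. (\<Sum>u\<in>V. Q v u * x u) = b v" by blast
  then have "\<forall>v\<in>V. Lap V E x v + sum x V = b v" using QL by simp
  then show ?thesis using key bs by blast
qed

lemma DD_quad:
  "DD V E (\<lambda>v. x v - t * f v) (\<lambda>v. x v - t * f v)
     = DD V E x x - 2 * t * DD V E f x + t^2 * DD V E f f"
proof -
  have "\<And>v u. ((x v - t * f v) - (x u - t * f u)) * ((x v - t * f v) - (x u - t * f u))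
     = (x v - x u) * (x v - x u) - 2 * t * ((f v - f u) * (x v - x u)) + t^2 * ((f v - f u) * (f v - f u))"
    by (simp add: algebra_simps power2_eq_square)
  then show ?thesis unfolding DD_def
    by (simp add: sum_subtractf sum.distrib sum_distrib_left)
qed

lemma eff_res_bound:
  fixes V :: "'a::linorder set"
  assumes sg: "simple_graph V E" and cg: "connected_graph V E"
    and i: "i \<in> V" and j: "j \<in> V" and ij: "i \<noteq> j"
  defines "K \<equiv> real (degree V E i + degree V E j) + (if E i j then 2 else 0)"
  shows "K > 0 \<and> eff_resistance V E i j \<ge> 4 / K"
proof -
  have fin: "finite V" and sym: "\<And>u v. E u v \<Longrightarrow> E v u" and irr: "\<And>u. \<not> E u u"
    using sg unfolding simple_graph_def by blast+
  define b where "b v = (if v = i \<and> v \<noteq> j then 1 else if v = j \<and> v \<noteq> i then -1 else (0::real))" for v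
  define f where "f v = (if v = i then 1 else 0) - (if v = j then 1 else (0::real))" for v
  have bf: "b = f" unfolding b_def f_def using ij by (auto simp: fun_eq_iff)
  have fs: "sum f V = 0" unfolding f_def using fin i j by (simp add: sum_subtractf)
  obtain x where x: "\<forall>v\<in>V. Lap V E x v = b v"
    using exists_potential[OF sg cg, of b] fs bf by auto
  have R: "eff_resistance V E i j = x i - x j"
    unfolding eff_resistance_def
  proof (rule the_equality)
    show "\<exists>y. (\<forall>v\<in>V. (\<Sum>u\<in>{u \<in> V. E v u}. y v - y u) =
               (if v = i \<and> v \<noteq> j then 1 else if v = j \<and> v \<noteq> i then -1 else 0)) \<and> x i - x j = y i - y j"
      using x unfolding Lap_def b_def by blast
  next
    fix r :: real assume "\<exists>y. (\<forall>v\<in>V. (\<Sum>u\<in>{u \<in> V. E v u}. y v - y u) =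
               (if v = i \<and> v \<noteq> j then 1 else if v = j \<and> v \<noteq> i then -1 else 0)) \<and> r = y i - y j"
    then obtain y where y: "\<forall>v\<in>V. Lap V E y v = b v" and r: "r = y i - y j"
      unfolding Lap_def b_def by blast
    have "\<forall>v\<in>V. Lap V E (\<lambda>v. y v - x v) v = 0"
    proof
      fix v assume v: "v \<in> V"
      have "Lap V E (\<lambda>v. y v - x v) v = Lap V E y v - Lap V E x v"
        unfolding Lap_def by (simp add: sum_subtractf[symmetric] algebra_simps)
      then show "Lap V E (\<lambda>v. y v - x v) v = 0" using x y v by simp
    qed
    from const_of_harmonic[OF sg cg this i j] show "r = x i - x j" using r by simp
  qed
  have sfx: "(\<Sum>v\<in>V. f v * Lap V E x v) = 2"
  proof -
    have "(\<Sum>v\<in>V. f v * Lap V E x v) = (\<Sum>v\<in>V. f v * f v)"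
      using x bf by (intro sum.cong) auto
    also have "\<dots> = (\<Sum>v\<in>V. (if v = i then 1 else 0) + (if v = j then 1 else 0))"
      unfolding f_def using ij by (intro sum.cong) auto
    also have "\<dots> = 2" using fin i j by (simp add: sum.distrib)
    finally show ?thesis .
  qed
  have sxx: "(\<Sum>v\<in>V. x v * Lap V E x v) = x i - x j"
  proof -
    have "(\<Sum>v\<in>V. x v * Lap V E x v) = (\<Sum>v\<in>V. x v * f v)"
      using x bf by (intro sum.cong) auto
    also have "\<dots> = (\<Sum>v\<in>V. (if v = i then x v else 0) - (if v = j then x v else 0))"
      unfolding f_def by (intro sum.cong) auto
    also have "\<dots> = x i - x j" using fin i j by (simp add: sum_subtractf)
    finally show ?thesis .
  qed
  have Lfi: "Lap V E f i = real (degree V E i) + (if E i j then 1 else 0)"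
  proof -
    have "Lap V E f i = (\<Sum>u\<in>{u \<in> V. E i u}. 1 + (if u = j then 1 else 0))"
      unfolding Lap_def f_def using ij irr by (intro sum.cong) auto
    then show ?thesis using fin j by (simp add: sum.distrib Defs.degree_def)
  qed
  have Lfj: "Lap V E f j = - (real (degree V E j) + (if E i j then 1 else 0))"
  proof -
    have "Lap V E f j = (\<Sum>u\<in>{u \<in> V. E j u}. - 1 - (if u = i then 1 else 0))"
      unfolding Lap_def f_def using ij irr by (intro sum.cong) auto
    then show ?thesis using fin i sym by (simp add: sum_subtractf Defs.degree_def)
  qed
  have sff: "(\<Sum>v\<in>V. f v * Lap V E f v) = K"
  proof -
    have "(\<Sum>v\<in>V. f v * Lap V E f v) = (\<Sum>v\<in>V. (if v = i then Lap V E f v else 0) - (if v = j then Lap V E f v else 0))"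
      unfolding f_def by (intro sum.cong) auto
    also have "\<dots> = Lap V E f i - Lap V E f j" using fin i j by (simp add: sum_subtractf)
    finally show ?thesis unfolding K_def Lfi Lfj by simp
  qed
  have quad: "0 \<le> 2 * eff_resistance V E i j - 8 * t + 2 * t^2 * K" for t
  proof -
    have "0 \<le> DD V E (\<lambda>v. x v - t * f v) (\<lambda>v. x v - t * f v)" by (rule DD_nonneg)
    also have "\<dots> = 2 * eff_resistance V E i j - 8 * t + 2 * t^2 * K"
    proof -
      have "DD V E x x = 2 * (x i - x j)" using DD_Lap[OF fin sym, where g=x and h=x] sxx by simp
      moreover have "DD V E f x = 4" using DD_Lap[OF fin sym, where g=f and h=x] sfx by simp
      moreover have "DD V E f f = 2 * K" using DD_Lap[OF fin sym, where g=f and h=f] sff by simp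
      ultimately show ?thesis unfolding DD_quad R by simp
    qed
    finally show ?thesis .
  qed
  have K0: "K \<ge> 0" unfolding K_def by simp
  have Kp: "K > 0"
  proof (rule ccontr)
    assume "\<not> K > 0"
    then have "K = 0" using K0 by simp
    then show False using quad[of "eff_resistance V E i j / 4 + 1"] by simp
  qed
  have "0 \<le> 2 * eff_resistance V E i j - 8 * (2 / K) + 2 * (2 / K)^2 * K" by (rule quad)
  also have "2 * (2 / K)^2 * K = 8 / K" using Kp by (simp add: power2_eq_square field_simps)
  finally have "0 \<le> 2 * eff_resistance V E i j - 8 / K" by simp
  then show ?thesis using Kp by simp
qed

lemma card_pairs:
  fixes V :: "'a::linorder set"
  assumes fin: "finite V"
  shows "2 * real (card {(i, j). i \<in> V \<and> j \<in> V \<and> i < j}) = real (card V) * (real (card V) - 1)"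
proof -
  define P where "P = {(i, j). i \<in> V \<and> j \<in> V \<and> i < j}"
  define D where "D = (\<lambda>i. (i, i)) ` V"
  have VV: "V \<times> V = D \<union> (P \<union> prod.swap ` P)"
    unfolding D_def P_def by (auto simp: image_iff)
  have fP: "finite P" unfolding P_def by (rule finite_subset[of _ "V \<times> V"]) (auto simp: fin)
  have fD: "finite D" unfolding D_def using fin by simp
  have cD: "card D = card V" unfolding D_def by (rule card_image) (auto simp: inj_on_def)
  have cS: "card (prod.swap ` P) = card P" by (rule card_image) (auto simp: inj_on_def)
  have d1: "P \<inter> prod.swap ` P = {}" unfolding P_def by auto
  have d2: "D \<inter> (P \<union> prod.swap ` P) = {}" unfolding P_def D_def by auto
  have "card (V \<times> V) = card D + (card P + card P)"
    unfolding VV using fP fD d1 d2 cS by (simp add: card_Un_disjoint)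
  then have "card V * card V = card V + 2 * card P" using cD by (simp add: card_cartesian_product)
  then have "real (card V) * real (card V) = real (card V) + 2 * real (card P)"
    by (metis of_nat_add of_nat_mult of_nat_numeral)
  then show ?thesis unfolding P_def by (simp add: algebra_simps)
qed

lemma card_edges:
  fixes V :: "'a::linorder set"
  assumes sg: "simple_graph V E"
  shows "card {p \<in> {(i, j). i \<in> V \<and> j \<in> V \<and> i < j}. E (fst p) (snd p)} = card (edge_set V E)"
proof -
  have sym: "\<And>u v. E u v \<Longrightarrow> E v u" and irr: "\<And>u. \<not> E u u"
    using sg unfolding simple_graph_def by blast+
  define S where "S = {p \<in> {(i, j). i \<in> V \<and> j \<in> V \<and> i < j}. E (fst p) (snd p)}"
  have inj: "inj_on (\<lambda>(i, j). {i, j}) S"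
    unfolding S_def inj_on_def by (auto simp: doubleton_eq_iff)
  have img: "(\<lambda>(i, j). {i, j}) ` S = edge_set V E"
  proof
    show "(\<lambda>(i, j). {i, j}) ` S \<subseteq> edge_set V E" unfolding S_def edge_set_def by fastforce
  next
    show "edge_set V E \<subseteq> (\<lambda>(i, j). {i, j}) ` S"
    proof
      fix e assume "e \<in> edge_set V E"
      then obtain u v where e: "e = {u, v}" "u \<in> V" "v \<in> V" "E u v" unfolding edge_set_def by auto
      then have "u \<noteq> v" using irr by auto
      then consider "u < v" | "v < u" by (metis linorder_neqE)
      then show "e \<in> (\<lambda>(i, j). {i, j}) ` S"
      proof cases
        case 1 then show ?thesis using e unfolding S_def by (auto intro!: image_eqI[of _ _ "(u, v)"])
      next
        case 2 then show ?thesis using e sym unfolding S_def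
          by (auto intro!: image_eqI[of _ _ "(v, u)"])
      qed
    qed
  qed
  show ?thesis using card_image[OF inj] img unfolding S_def by simp
qed

theorem corollary2:
  fixes V :: "('a::linorder) set" and E :: "'a \<Rightarrow> 'a \<Rightarrow> bool"
  assumes "simple_graph V E"
    and "connected_graph V E"
    and "card V > 2"
  shows "add_degree_kirchhoff V E \<ge>
           2 * real (card V) * (real (card V) - 1)
           - 4 * real (card (edge_set V E)) / (1 + real (Min (degree V E ` V)))"
proof -
  note sg = assms(1) and cg = assms(2)
  have fin: "finite V" using sg unfolding simple_graph_def by blast
  define P where "P = {(i, j). i \<in> V \<and> j \<in> V \<and> i < j}"
  define d1 where "d1 = real (Min (degree V E ` V))"
  define c where "c = 4 / (1 + d1)"
  have d1le: "\<And>v. v \<in> V \<Longrightarrow> d1 \<le> real (degree V E v)"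
    unfolding d1_def using fin by simp
  have d1nn: "d1 \<ge> 0" unfolding d1_def by simp
  have fP: "finite P" unfolding P_def by (rule finite_subset[of _ "V \<times> V"]) (auto simp: fin)
  have tm: "real (degree V E i + degree V E j) * eff_resistance V E i j
      \<ge> 4 - (if E i j then c else 0)" if ij: "(i, j) \<in> P" for i j
  proof -
    have i: "i \<in> V" and j: "j \<in> V" and ne: "i \<noteq> j" using ij unfolding P_def by auto
    define Dg where "Dg = real (degree V E i + degree V E j)"
    define K where "K = Dg + (if E i j then 2 else 0)"
    have b: "K > 0 \<and> eff_resistance V E i j \<ge> 4 / K"
      using eff_res_bound[OF sg cg i j ne] unfolding K_def Dg_def by simp
    have Dg0: "Dg \<ge> 0" unfolding Dg_def by simp
    have "Dg * eff_resistance V E i j \<ge> Dg * (4 / K)"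
      using b Dg0 by (intro mult_left_mono) auto
    moreover have "Dg * (4 / K) \<ge> 4 - (if E i j then c else 0)"
    proof (cases "E i j")
      case False
      then have "K = Dg" unfolding K_def by simp
      then show ?thesis using b False by simp
    next
      case True
      then have K: "K = Dg + 2" unfolding K_def by simp
      have Dge: "Dg \<ge> 2 * d1" using d1le[OF i] d1le[OF j] unfolding Dg_def by simp
      have "Dg * (4 / K) = 4 - 8 / (Dg + 2)" unfolding K using Dg0 by (simp add: field_simps)
      moreover have "8 / (Dg + 2) \<le> 8 / (2 * d1 + 2)"
        using Dge d1nn by (intro divide_left_mono) auto
      moreover have "8 / (2 * d1 + 2) = c" unfolding c_def using d1nn by (simp add: field_simps)
      ultimately show ?thesis using True by simp
    qed
    ultimately show ?thesis unfolding Dg_def by linarith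
  qed
  have "add_degree_kirchhoff V E \<ge> (\<Sum>(i, j)\<in>P. 4 - (if E i j then c else 0))"
    unfolding add_degree_kirchhoff_def P_def[symmetric]
    by (rule sum_mono) (use tm in auto)
  also have "(\<Sum>(i, j)\<in>P. 4 - (if E i j then c else 0))
      = 4 * real (card P) - (\<Sum>p\<in>P. if E (fst p) (snd p) then c else 0)"
    by (simp add: sum_subtractf case_prod_beta)
  also have "(\<Sum>p\<in>P. if E (fst p) (snd p) then c else 0) = c * real (card {p \<in> P. E (fst p) (snd p)})"
    using fP by (simp add: sum.inter_filter[symmetric])
  also have "card {p \<in> P. E (fst p) (snd p)} = card (edge_set V E)"
    unfolding P_def by (rule card_edges[OF sg])
  also have "4 * real (card P) = 2 * real (card V) * (real (card V) - 1)"
    using card_pairs[OF fin] unfolding P_def by simp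
  finally show ?thesis unfolding c_def d1_def by simp
qed

end
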